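(* Let $\ell\geq k$ be positive integers, $b\in[\ell-k+1]$, $\mu\in\mathcal{P}^\ell$, and put $b'=\ell-k-b+2$. Consider the conditions, for a partition $\nu\in\mathcal{P}^\ell$ and an integer $c\in[\ell-k+1]$: (i) $\nu(c)=c+k-1$ and $\nu(c+k-1)=c$; (ii) if $1\leq i<c$ then $\nu(\nu(i))>i$; (iii) if $c+k-1<i\leq\ell$ then $\nu(\nu(i))<i$. Then: (a) $\mu$ satisfies (i), (ii), (iii) for $c=b$ if and only if $\tau_\ell(\mu)$ satisfies (i), (ii), (iii) for $c=b'$. (b) Suppose $\mu$ satisfies (i) for $c=b$, and define $\tilde\lambda,\tilde\lambda'\in\mathcal{P}_{\rm sq}^k$ by $\tilde\lambda(i)=\mu(b+i-1)-b+1$ and $\tilde\lambda'(i)=\tau_\ell(\mu)(b'+i-1)-b'+1$ for $1\leq i\leq k$. Then $\tau_k(\tilde\lambda)=\tilde\lambda'$.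
   Context: For a positive integer $n$, $[n]=\{1,\dots,n\}$. A partition with $n$ parts is a sequence $(\lambda_1,\dots,\lambda_n)$ of positive integers with $\lambda_1\geq\dots\geq\lambda_n>0$. $\mathcal{P}^{n,k}$ is the set of partitions with exactly $n$ parts and $\lambda_1\leq k$, regarded as weakly decreasing functions $[n]\to[k]$, $\lambda(i)=\lambda_i$; $\mathcal{P}^k=\mathcal{P}^{k,k}$. The map $\tau_k:\mathcal{P}^{n,k}\to\mathcal{P}^{n,k}$ is $\tau_k(\lambda_1,\dots,\lambda_n)=(k+1-\lambda_n,\dots,k+1-\lambda_1)$. $\mathcal{P}_{\rm sq}^k=\{\lambda\in\mathcal{P}^k:\lambda_1=k,\ \lambda_k=1\}$. *)

theory Defs
  imports Main
begin

text \<open>Partitions with exactly n parts and largest part at most k, as weakly decreasing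
functions [n] -> [k]; extended by 0 outside [n] so that equality of partitions is
plain function equality.\<close>
definition Part :: "nat \<Rightarrow> nat \<Rightarrow> (nat \<Rightarrow> nat) set" where
  "Part n k = {lam. (\<forall>i\<in>{1..n}. lam i \<in> {1..k})
                  \<and> (\<forall>i j. 1 \<le> i \<longrightarrow> i \<le> j \<longrightarrow> j \<le> n \<longrightarrow> lam j \<le> lam i)
                  \<and> (\<forall>i. i \<notin> {1..n} \<longrightarrow> lam i = 0)}"

definition tau :: "nat \<Rightarrow> nat \<Rightarrow> (nat \<Rightarrow> nat) \<Rightarrow> (nat \<Rightarrow> nat)" where
  "tau n k lam = (\<lambda>i. if i \<in> {1..n} then k + 1 - lam (n + 1 - i) else 0)"

definition Psq :: "nat \<Rightarrow> (nat \<Rightarrow> nat) set" where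
  "Psq k = {lam \<in> Part k k. lam 1 = k \<and> lam k = 1}"

definition cond_i :: "nat \<Rightarrow> (nat \<Rightarrow> nat) \<Rightarrow> nat \<Rightarrow> bool" where
  "cond_i k nu c \<longleftrightarrow> nu c = c + k - 1 \<and> nu (c + k - 1) = c"

definition cond_all :: "nat \<Rightarrow> nat \<Rightarrow> (nat \<Rightarrow> nat) \<Rightarrow> nat \<Rightarrow> bool" where
  "cond_all l k nu c \<longleftrightarrow> cond_i k nu c
     \<and> (\<forall>i. 1 \<le> i \<and> i < c \<longrightarrow> nu (nu i) > i)
     \<and> (\<forall>i. c + k - 1 < i \<and> i \<le> l \<longrightarrow> nu (nu i) < i)"

end

theory Submission
  imports Defs
begin

lemma Part_val: "mu \<in> Part l l \<Longrightarrow> 1 \<le> i \<Longrightarrow> i \<le> l \<Longrightarrow> 1 \<le> mu i \<and> mu i \<le> l"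
  unfolding Part_def by auto

lemma Part_mono: "mu \<in> Part l l \<Longrightarrow> 1 \<le> i \<Longrightarrow> i \<le> j \<Longrightarrow> j \<le> l \<Longrightarrow> mu j \<le> mu i"
  unfolding Part_def by auto

lemma Part_out: "mu \<in> Part l l \<Longrightarrow> i \<notin> {1..l} \<Longrightarrow> mu i = 0"
  unfolding Part_def by auto

lemma tau_val: "1 \<le> i \<Longrightarrow> i \<le> l \<Longrightarrow> tau l k mu i = k + 1 - mu (l + 1 - i)"
  by (simp add: tau_def)

lemma tau_out: "i \<notin> {1..l} \<Longrightarrow> tau l k f i = 0"
  unfolding tau_def by (simp only: if_False)

lemma tau_Part: assumes "mu \<in> Part l l" shows "tau l l mu \<in> Part l l"
proof -
  have "\<forall>i\<in>{1..l}. tau l l mu i \<in> {1..l}"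
  proof
    fix i assume "i \<in> {1..l}"
    then have "1 \<le> mu (l+1-i) \<and> mu (l+1-i) \<le> l" using Part_val[OF assms] by auto
    then show "tau l l mu i \<in> {1..l}" using \<open>i \<in> {1..l}\<close> by (auto simp: tau_def)
  qed
  moreover have "\<forall>i j. 1 \<le> i \<longrightarrow> i \<le> j \<longrightarrow> j \<le> l \<longrightarrow> tau l l mu j \<le> tau l l mu i"
  proof (intro allI impI)
    fix i j :: nat assume "1 \<le> i" "i \<le> j" "j \<le> l"
    then have "mu (l+1-i) \<le> mu (l+1-j)" using Part_mono[OF assms, of "l+1-j" "l+1-i"] by auto
    then show "tau l l mu j \<le> tau l l mu i" using \<open>1 \<le> i\<close> \<open>i \<le> j\<close> \<open>j \<le> l\<close> by (simp add: tau_def)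
  qed
  moreover have "\<forall>i. i \<notin> {1..l} \<longrightarrow> tau l l mu i = 0" by (simp add: tau_def)
  ultimately show ?thesis unfolding Part_def by blast
qed

lemma tau_tau: assumes "mu \<in> Part l l" shows "tau l l (tau l l mu) = mu"
proof
  fix i
  show "tau l l (tau l l mu) i = mu i"
  proof (cases "i \<in> {1..l}")
    case True
    then have m: "1 \<le> mu i \<and> mu i \<le> l" using Part_val[OF assms] by auto
    have "tau l l mu (l+1-i) = l+1 - mu i" using True tau_val[of "l+1-i" l l mu] by auto
    then show ?thesis using tau_val[of i l l "tau l l mu"] True m by auto
  next
    case False
    then show ?thesis using Part_out[OF assms] tau_out[OF False] by metis
  qed
qed

lemma dir:
  assumes "1 \<le> k" "k \<le> l" "1 \<le> b" "b \<le> l - k + 1" "mu \<in> Part l l" "cond_all l k mu b"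
  shows "cond_all l k (tau l l mu) (l + 2 - (k + b))"
proof -
  define nu where "nu = tau l l mu"
  have nunu: "nu (nu i) = l + 1 - mu (mu (l + 1 - i))" if "1 \<le> i" "i \<le> l" for i
  proof -
    have m: "1 \<le> mu (l+1-i) \<and> mu (l+1-i) \<le> l" using Part_val[OF assms(5)] that by auto
    have "nu i = l + 1 - mu (l+1-i)" using that by (simp add: nu_def tau_def)
    moreover have "l + 1 - (l + 1 - mu (l+1-i)) = mu (l+1-i)" using m by auto
    ultimately have ni: "nu i = l + 1 - mu (l+1-i)" "1 \<le> nu i" "nu i \<le> l" "l + 1 - nu i = mu (l+1-i)" using m by auto
    show ?thesis using tau_val[of "nu i" l l mu] ni unfolding nu_def by simp
  qed
  have c1: "mu b = b + k - 1" "mu (b + k - 1) = b" using assms(6) by (auto simp: cond_all_def cond_i_def)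
  have c2: "\<And>i. 1 \<le> i \<and> i < b \<Longrightarrow> mu (mu i) > i" using assms(6) by (auto simp: cond_all_def)
  have c3: "\<And>i. b + k - 1 < i \<and> i \<le> l \<Longrightarrow> mu (mu i) < i" using assms(6) by (auto simp: cond_all_def)
  have e1: "l + 1 - (l + 2 - (k + b)) = b + k - 1" using assms by auto
  have e2: "l + 1 - (l + 2 - (k + b) + k - 1) = b" using assms by auto
  have "nu (l + 2 - (k + b)) = l + 1 - mu (b + k - 1)"
    using assms e1 tau_val[of "l + 2 - (k + b)" l l mu] unfolding nu_def by simp
  moreover have "nu (l + 2 - (k + b) + k - 1) = l + 1 - mu b"
    using assms e2 tau_val[of "l + 2 - (k + b) + k - 1" l l mu] unfolding nu_def by simp
  ultimately have i: "cond_i k nu (l + 2 - (k + b))" using c1 assms by (simp add: cond_i_def)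
  have ii: "nu (nu i) > i" if "1 \<le> i \<and> i < l + 2 - (k + b)" for i
  proof -
    have "b + k - 1 < l+1-i \<and> l+1-i \<le> l" using that assms by linarith
    then have "mu (mu (l+1-i)) < l+1-i" using c3[of "l+1-i"] by blast
    then show ?thesis using nunu[of i] that assms by auto
  qed
  have iii: "nu (nu i) < i" if "l + 2 - (k + b) + k - 1 < i \<and> i \<le> l" for i
  proof -
    have "1 \<le> l+1-i \<and> l+1-i < b" using that assms by linarith
    then have "mu (mu (l+1-i)) > l+1-i" using c2[of "l+1-i"] by blast
    then show ?thesis using nunu[of i] that assms by auto
  qed
  show ?thesis using i ii iii unfolding cond_all_def nu_def by blast
qed

theorem lemma3p3:
  fixes l k b :: nat and mu :: "nat \<Rightarrow> nat"
  assumes "1 \<le> k" and "k \<le> l" and "b \<in> {1..l - k + 1}" and "mu \<in> Part l l"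
  shows "(cond_all l k mu b \<longleftrightarrow> cond_all l k (tau l l mu) (l + 2 - (k + b)))
    \<and> (cond_i k mu b \<longrightarrow>
        (let lt = (\<lambda>i. if i \<in> {1..k} then mu (b + i - 1) + 1 - b else 0);
             lt' = (\<lambda>i. if i \<in> {1..k}
                        then tau l l mu ((l + 2 - (k + b)) + i - 1) + 1 - (l + 2 - (k + b))
                        else 0)
         in lt \<in> Psq k \<and> lt' \<in> Psq k \<and> tau k k lt = lt'))"
proof
  have b: "1 \<le> b" "b \<le> l - k + 1" using assms(3) by auto
  have b': "1 \<le> l + 2 - (k + b)" "l + 2 - (k + b) \<le> l - k + 1" using b assms by auto
  have bb: "l + 2 - (k + (l + 2 - (k + b))) = b" using b assms by auto
  show "cond_all l k mu b \<longleftrightarrow> cond_all l k (tau l l mu) (l + 2 - (k + b))"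
  proof
    assume "cond_all l k mu b"
    then show "cond_all l k (tau l l mu) (l + 2 - (k + b))"
      using dir[OF assms(1,2) b assms(4)] by blast
  next
    assume "cond_all l k (tau l l mu) (l + 2 - (k + b))"
    from dir[OF assms(1,2) b' tau_Part[OF assms(4)] this]
    show "cond_all l k mu b" unfolding bb tau_tau[OF assms(4)] .
  qed
next
  show "cond_i k mu b \<longrightarrow>
        (let lt = (\<lambda>i. if i \<in> {1..k} then mu (b + i - 1) + 1 - b else 0);
             lt' = (\<lambda>i. if i \<in> {1..k}
                        then tau l l mu ((l + 2 - (k + b)) + i - 1) + 1 - (l + 2 - (k + b))
                        else 0)
         in lt \<in> Psq k \<and> lt' \<in> Psq k \<and> tau k k lt = lt')"
  proof (intro impI)
    assume ci: "cond_i k mu b"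
    have b: "1 \<le> b" "b \<le> l - k + 1" using assms(3) by auto
    have c1: "mu b = b + k - 1" "mu (b + k - 1) = b" using ci by (auto simp: cond_i_def)
    have rng: "b \<le> mu j \<and> mu j \<le> b + k - 1" if "b \<le> j" "j \<le> b + k - 1" for j
      using Part_mono[OF assms(4), of b j] Part_mono[OF assms(4), of j "b+k-1"] that b assms(1,2) c1
      by auto
    define lt where "lt = (\<lambda>i. if i \<in> {1..k} then mu (b + i - 1) + 1 - b else 0)"
    define lt' where "lt' = (\<lambda>i. if i \<in> {1..k}
                        then tau l l mu ((l + 2 - (k + b)) + i - 1) + 1 - (l + 2 - (k + b))
                        else 0)"
    have lt'v: "lt' i = k + b - mu (b + k - i)" if "i \<in> {1..k}" for i
    proof -
      have r: "b \<le> mu (b + k - i) \<and> mu (b + k - i) \<le> b + k - 1" using rng[of "b+k-i"] that by auto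
      have "tau l l mu ((l + 2 - (k + b)) + i - 1) = l + 1 - mu (l + 1 - ((l + 2 - (k + b)) + i - 1))"
        using that b assms(1,2) by (intro tau_val) auto
      moreover have "l + 1 - ((l + 2 - (k + b)) + i - 1) = b + k - i" using that b assms(1,2) by auto
      ultimately have "lt' i = l + 1 - mu (b + k - i) + 1 - (l + 2 - (k + b))" using that by (simp add: lt'_def)
      moreover have "mu (b + k - i) \<le> l" using r b assms(1,2) by linarith
      ultimately show ?thesis using that r b assms(1,2) by linarith
    qed
    have taueq: "tau k k lt = lt'"
    proof
      fix i show "tau k k lt i = lt' i"
      proof (cases "i \<in> {1..k}")
        case True
        have r: "b \<le> mu (b + k - i) \<and> mu (b + k - i) \<le> b + k - 1" using rng[of "b+k-i"] True by auto
        have "b + (k + 1 - i) - 1 = b + k - i" using True by auto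
        moreover have "k + 1 - i \<in> {1..k}" using True by auto
        ultimately have "lt (k + 1 - i) = mu (b + k - i) + 1 - b" by (simp add: lt_def)
        moreover have "tau k k lt i = k + 1 - lt (k + 1 - i)" using True tau_val[of i k k lt] by auto
        ultimately have "tau k k lt i = k + 1 - (mu (b + k - i) + 1 - b)" by simp
        then show ?thesis using lt'v[OF True] r by auto
      next
        case False
        have "lt' i = 0" using False unfolding lt'_def by (simp only: if_False)
        then show ?thesis using tau_out[OF False] by simp
      qed
    qed
    have ltP: "lt \<in> Psq k"
    proof -
      have "\<forall>i\<in>{1..k}. lt i \<in> {1..k}"
      proof
        fix i assume i: "i \<in> {1..k}"
        have "b \<le> mu (b+i-1) \<and> mu (b+i-1) \<le> b + k - 1" using rng[of "b+i-1"] i by auto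
        then show "lt i \<in> {1..k}" using i by (auto simp: lt_def)
      qed
      moreover have "\<forall>i j. 1 \<le> i \<longrightarrow> i \<le> j \<longrightarrow> j \<le> k \<longrightarrow> lt j \<le> lt i"
      proof (intro allI impI)
        fix i j :: nat assume h: "1 \<le> i" "i \<le> j" "j \<le> k"
        have "mu (b+j-1) \<le> mu (b+i-1)" using Part_mono[OF assms(4), of "b+i-1" "b+j-1"] h b assms(1,2) by auto
        then show "lt j \<le> lt i" using h by (simp add: lt_def)
      qed
      moreover have "\<forall>i. i \<notin> {1..k} \<longrightarrow> lt i = 0" by (simp add: lt_def)
      moreover have "lt 1 = k" using c1 assms(1) by (simp add: lt_def)
      moreover have "lt k = 1" using c1 assms(1) by (simp add: lt_def)
      ultimately show ?thesis unfolding Psq_def Part_def by blast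
    qed
    have lt'P: "lt' \<in> Psq k"
    proof -
      have "lt' = tau k k lt" using taueq by simp
      moreover have "tau k k lt \<in> Part k k" using tau_Part ltP unfolding Psq_def by blast
      moreover have "tau k k lt 1 = k" "tau k k lt k = 1" using ltP assms(1) unfolding Psq_def
        by (auto simp: tau_def)
      ultimately show ?thesis unfolding Psq_def by simp
    qed
    show "let lt = (\<lambda>i. if i \<in> {1..k} then mu (b + i - 1) + 1 - b else 0);
             lt' = (\<lambda>i. if i \<in> {1..k}
                        then tau l l mu ((l + 2 - (k + b)) + i - 1) + 1 - (l + 2 - (k + b))
                        else 0)
         in lt \<in> Psq k \<and> lt' \<in> Psq k \<and> tau k k lt = lt'"
      using ltP lt'P taueq unfolding lt_def lt'_def Let_def by blast
  qed
qed

end
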